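(* Let $K\subset\mathbb{R}^n$ and $C\subset\mathbb{R}^m$ be nonempty, convex, closed and bounded sets, and let $f,h:\mathbb{R}^n\times\mathbb{R}^m\to\mathbb{R}$ be continuous functions such that, for every $y\in K$, $f(y,\cdot)$ and $h(y,\cdot)$ are convex, and such that $f$ takes only positive values. Fix $y\in K$. Let $(\varepsilon_k)$ be a sequence of positive numbers with $\varepsilon_k\to0$, and let $x_k\in\mathcal{S}_{\varepsilon_k}(y)$ for every $k$. If $x_k\to\bar x$, then $\bar x\in\widetilde{\mathcal{S}}(y)$.
   Context: $f^2=(f)^2$. $\mathcal{S}(y)=\operatorname{argmin}\{h(y,z)\mid z\in C\}$; for $\varepsilon>0$, $\mathcal{S}_\varepsilon(y)=\operatorname{argmin}\{h(y,z)+\varepsilon f^2(y,z)\mid z\in C\}$; $\widetilde{\mathcal{S}}(y)=\operatorname{argmin}\{f^2(y,z)\mid z\in\mathcal{S}(y)\}$. *)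

theory Defs
  imports "HOL-Analysis.Analysis"
begin

definition argmin_set :: "('a \<Rightarrow> real) \<Rightarrow> 'a set \<Rightarrow> 'a set" where
  "argmin_set \<phi> A = {z \<in> A. \<forall>w\<in>A. \<phi> z \<le> \<phi> w}"

definition solS :: "('n \<Rightarrow> 'm \<Rightarrow> real) \<Rightarrow> 'm set \<Rightarrow> 'n \<Rightarrow> 'm set" where
  "solS h C y = argmin_set (\<lambda>z. h y z) C"

definition solS_eps :: "('n \<Rightarrow> 'm \<Rightarrow> real) \<Rightarrow> ('n \<Rightarrow> 'm \<Rightarrow> real) \<Rightarrow> 'm set \<Rightarrow> real \<Rightarrow> 'n \<Rightarrow> 'm set" where
  "solS_eps f h C \<epsilon> y = argmin_set (\<lambda>z. h y z + \<epsilon> * (f y z)\<^sup>2) C"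

definition solS_tilde :: "('n \<Rightarrow> 'm \<Rightarrow> real) \<Rightarrow> ('n \<Rightarrow> 'm \<Rightarrow> real) \<Rightarrow> 'm set \<Rightarrow> 'n \<Rightarrow> 'm set" where
  "solS_tilde f h C y = argmin_set (\<lambda>z. (f y z)\<^sup>2) (solS h C y)"

end

theory Submission
  imports Defs
begin

theorem lemma3p2:
  fixes K :: "'n::euclidean_space set" and C :: "'m::euclidean_space set"
    and f h :: "'n \<Rightarrow> 'm \<Rightarrow> real"
    and y :: 'n and \<epsilon> :: "nat \<Rightarrow> real" and x :: "nat \<Rightarrow> 'm" and xbar :: 'm
  assumes "K \<noteq> {}" "convex K" "closed K" "bounded K"
    and "C \<noteq> {}" "convex C" "closed C" "bounded C"
    and "continuous_on UNIV (\<lambda>(u, z). f u z)"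
    and "continuous_on UNIV (\<lambda>(u, z). h u z)"
    and "\<And>u. u \<in> K \<Longrightarrow> convex_on UNIV (f u)"
    and "\<And>u. u \<in> K \<Longrightarrow> convex_on UNIV (h u)"
    and "\<And>u z. f u z > 0"
    and "y \<in> K"
    and "\<And>k. \<epsilon> k > 0"
    and "\<epsilon> \<longlonglongrightarrow> 0"
    and "\<And>k. x k \<in> solS_eps f h C (\<epsilon> k) y"
    and "x \<longlonglongrightarrow> xbar"
  shows "xbar \<in> solS_tilde f h C y"
proof -
  have xC: "x k \<in> C" for k using assms(17) by (auto simp: solS_eps_def argmin_set_def)
  have opt: "h y (x k) + \<epsilon> k * (f y (x k))\<^sup>2 \<le> h y w + \<epsilon> k * (f y w)\<^sup>2" if "w \<in> C" for k w
    using assms(17)[of k] that by (auto simp: solS_eps_def argmin_set_def)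
  have xbC: "xbar \<in> C"
    using closed_sequentially[OF assms(7)] xC assms(18) by blast
  have cp: "continuous_on UNIV (\<lambda>z. (y, z))"
    by (intro continuous_intros)
  have ch: "continuous_on UNIV (\<lambda>z. h y z)"
    using continuous_on_compose[OF cp, of "\<lambda>(u, z). h u z"] continuous_on_subset[OF assms(10), of "range (Pair y)"]
    by (simp add: o_def)
  have cf: "continuous_on UNIV (\<lambda>z. f y z)"
    using continuous_on_compose[OF cp, of "\<lambda>(u, z). f u z"] continuous_on_subset[OF assms(9), of "range (Pair y)"]
    by (simp add: o_def)
  have th: "(\<lambda>k. h y (x k)) \<longlonglongrightarrow> h y xbar"
    using continuous_on_tendsto_compose[OF ch assms(18)] by simp
  have tf: "(\<lambda>k. (f y (x k))\<^sup>2) \<longlonglongrightarrow> (f y xbar)\<^sup>2"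
    using continuous_on_tendsto_compose[OF cf assms(18)] by (simp add: tendsto_power)
  have S: "xbar \<in> solS h C y"
    unfolding solS_def argmin_set_def
  proof (intro CollectI conjI ballI xbC)
    fix w assume w: "w \<in> C"
    have le: "h y (x k) \<le> h y w + \<epsilon> k * (f y w)\<^sup>2" for k
    proof -
      have "0 \<le> \<epsilon> k * (f y (x k))\<^sup>2" using assms(15)[of k] by simp
      thus ?thesis using opt[OF w, of k] by linarith
    qed
    have "(\<lambda>k. h y w + \<epsilon> k * (f y w)\<^sup>2) \<longlonglongrightarrow> h y w + 0 * (f y w)\<^sup>2"
      by (intro tendsto_intros assms(16))
    then show "h y xbar \<le> h y w"
      using tendsto_le[OF sequentially_bot _ th] le by simp
  qed
  show ?thesis
    unfolding solS_tilde_def argmin_set_def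
  proof (intro CollectI conjI ballI S)
    fix w assume w: "w \<in> solS h C y"
    hence wC: "w \<in> C" and gw: "h y w \<le> h y (x k)" for k
      using xC by (auto simp: solS_def argmin_set_def)
    have le: "(f y (x k))\<^sup>2 \<le> (f y w)\<^sup>2" for k
    proof -
      have "\<epsilon> k * (f y (x k))\<^sup>2 \<le> \<epsilon> k * (f y w)\<^sup>2"
        using opt[OF wC, of k] gw[of k] by linarith
      thus ?thesis using assms(15)[of k] by simp
    qed
    show "(f y xbar)\<^sup>2 \<le> (f y w)\<^sup>2"
      using tendsto_le[OF sequentially_bot tendsto_const tf] le by simp
  qed
qed

end
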